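(* Let $F:\mathbb{R}^d\to\mathbb{R}^d$ be $L$-Lipschitz and $\mu$-quasi strongly monotone with respect to $x^*$ where $F(x^* )=0$. Consider the deterministic past extragradient method: given $x_0$, $\hat x_{-1}=x_0$, and for $k\ge0$, $\hat x_k=x_k-\omega F(\hat x_{k-1})$, $x_{k+1}=x_k-\omega F(\hat x_k)$, with $0<\omega\le\frac1{4L}$. Then for all $k\ge0$, $$R_k^2\le\Big(1-\frac{\omega\mu}{2}\Big)^kR_0^2,\qquad R_k^2:=\|x_k-x^*\|^2+\|x_k-\hat x_{k-1}\|^2 .$$
   Context: $L$-Lipschitz: $\|F(x)-F(y)\|\le L\|x-y\|$. $\mu$-quasi strongly monotone ($\mu>0$): $\langle F(x),x-x^*\rangle\ge\mu\|x-x^*\|^2$ for all $x$. (This is the special case of stochastic past extragradient with exact operator evaluations, i.e. Expected Residual parameter $\delta=0$ and $\sigma_*^2=0$.) *)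

theory Defs
  imports "HOL-Analysis.Analysis"
begin

text \<open>Deterministic past extragradient. pe_state F w x0 k = (x_k, xhat_{k-1}),
with xhat_{-1} = x0, xhat_k = x_k - w F(xhat_{k-1}), x_{k+1} = x_k - w F(xhat_k).\<close>

primrec pe_state :: "('a::real_normed_vector \<Rightarrow> 'a) \<Rightarrow> real \<Rightarrow> 'a \<Rightarrow> nat \<Rightarrow> 'a \<times> 'a" where
  "pe_state F w x0 0 = (x0, x0)"
| "pe_state F w x0 (Suc k) =
     (let xk = fst (pe_state F w x0 k);
          xh = xk - w *\<^sub>R F (snd (pe_state F w x0 k))
      in (xk - w *\<^sub>R F xh, xh))"

definition pe_x :: "('a::real_normed_vector \<Rightarrow> 'a) \<Rightarrow> real \<Rightarrow> 'a \<Rightarrow> nat \<Rightarrow> 'a" where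
  "pe_x F w x0 k = fst (pe_state F w x0 k)"

definition pe_xhat :: "('a::real_normed_vector \<Rightarrow> 'a) \<Rightarrow> real \<Rightarrow> 'a \<Rightarrow> nat \<Rightarrow> 'a" where
  "pe_xhat F w x0 k = snd (pe_state F w x0 (Suc k))"

definition pe_xhat_prev :: "('a::real_normed_vector \<Rightarrow> 'a) \<Rightarrow> real \<Rightarrow> 'a \<Rightarrow> nat \<Rightarrow> 'a" where
  "pe_xhat_prev F w x0 k = snd (pe_state F w x0 k)"

end

theory Submission
  imports Defs
begin

lemma sq_sum_le: "((p::real) + q)\<^sup>2 \<le> 2 * p\<^sup>2 + 2 * q\<^sup>2"
proof -
  have "0 \<le> (p - q)\<^sup>2" by simp
  then show ?thesis by (simp add: power2_eq_square algebra_simps)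
qed

lemma step_bound:
  fixes F :: "'a::real_inner \<Rightarrow> 'a" and xstar x h' :: 'a
  assumes lip: "\<And>x y. norm (F x - F y) \<le> L * norm (x - y)"
    and qsm: "\<And>x. inner (F x) (x - xstar) \<ge> \<mu> * (norm (x - xstar))\<^sup>2"
    and mu: "0 < \<mu>" "\<mu> \<le> L"
    and step: "0 < \<omega>" "\<omega> * L \<le> 1/4"
  defines "h \<equiv> x - \<omega> *\<^sub>R F h'"
  defines "xp \<equiv> x - \<omega> *\<^sub>R F h"
  shows "(norm (xp - xstar))\<^sup>2 + (norm (xp - h))\<^sup>2
         \<le> (1 - \<omega> * \<mu> / 2) * ((norm (x - xstar))\<^sup>2 + (norm (x - h'))\<^sup>2)"
proof -
  define g where "g = F h"
  define g' where "g' = F h'"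
  define A where "A = (norm (x - xstar))\<^sup>2"
  define B where "B = (norm (x - h'))\<^sup>2"
  define G where "G = (norm g')\<^sup>2"
  define H where "H = (norm (h - xstar))\<^sup>2"
  define D where "D = (norm (g - g'))\<^sup>2"
  define E where "E = (norm (h - h'))\<^sup>2"
  define P where "P = inner g (h - xstar)"
  have hdef: "h = x - \<omega> *\<^sub>R g'" using h_def g'_def by simp
  have xpdef: "xp = x - \<omega> *\<^sub>R g" using xp_def g_def by simp
  have E1: "(norm (xp - xstar))\<^sup>2 = A - 2 * \<omega> * P + \<omega>^2 * D - \<omega>^2 * G"
  proof -
    define a where "a = x - xstar"
    have e1: "xp - xstar = a - \<omega> *\<^sub>R g" unfolding a_def xpdef by simp
    have e2: "h - xstar = a - \<omega> *\<^sub>R g'" unfolding a_def hdef by simp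
    show ?thesis
      unfolding A_def P_def D_def G_def e1 e2 a_def[symmetric]
      apply (simp only: power2_norm_eq_inner inner_diff_left inner_diff_right inner_scaleR_left inner_scaleR_right)
      apply (simp add: inner_commute algebra_simps power2_eq_square)
      done
  qed
  have I5: "(norm (xp - h))\<^sup>2 = \<omega>^2 * D"
  proof -
    have "xp - h = \<omega> *\<^sub>R (g' - g)" unfolding hdef xpdef by (simp add: algebra_simps)
    then show ?thesis unfolding D_def using step(1)
      by (simp add: power_mult_distrib norm_minus_commute)
  qed
  have I1: "P \<ge> \<mu> * H" unfolding P_def H_def g_def using qsm by simp
  have I2: "A \<le> 2 * H + 2 * \<omega>^2 * G"
  proof -
    have "x - xstar = (h - xstar) + \<omega> *\<^sub>R g'" unfolding hdef by simp
    then have "norm (x - xstar) \<le> norm (h - xstar) + \<omega> * norm g'"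
      using norm_triangle_ineq[of "h - xstar" "\<omega> *\<^sub>R g'"] step(1) by (simp only:) simp
    then have "A \<le> (norm (h - xstar) + \<omega> * norm g')\<^sup>2" unfolding A_def
      by (simp add: power_mono)
    also have "\<dots> \<le> 2 * H + 2 * \<omega>^2 * G" unfolding H_def G_def
      using sq_sum_le[of "norm (h - xstar)" "\<omega> * norm g'"] by (simp add: power_mult_distrib)
    finally show ?thesis .
  qed
  have I3: "D \<le> L^2 * E"
  proof -
    have "norm (g - g') \<le> L * norm (h - h')" unfolding g_def g'_def by (rule lip)
    then have "(norm (g - g'))\<^sup>2 \<le> (L * norm (h - h'))\<^sup>2" by (simp add: power_mono)
    then show ?thesis unfolding D_def E_def by (simp add: power_mult_distrib)
  qed
  have I4: "E \<le> 2 * \<omega>^2 * G + 2 * B"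
  proof -
    have "h - h' = (x - h') - \<omega> *\<^sub>R g'" unfolding hdef by simp
    then have "norm (h - h') \<le> norm (x - h') + \<omega> * norm g'"
      using norm_triangle_ineq4[of "x - h'" "\<omega> *\<^sub>R g'"] step(1) by (simp only:) simp
    then have "E \<le> (norm (x - h') + \<omega> * norm g')\<^sup>2" unfolding E_def
      by (simp add: power_mono)
    also have "\<dots> \<le> 2 * \<omega>^2 * G + 2 * B" unfolding B_def G_def
      using sq_sum_le[of "norm (x - h')" "\<omega> * norm g'"] by (simp add: power_mult_distrib)
    finally show ?thesis .
  qed
  have L0: "L > 0" using mu by simp
  define s where "s = \<omega> * \<mu>"
  define t where "t = \<omega> * L"
  have s0: "0 < s" "s \<le> t" using mu step unfolding s_def t_def by (auto simp: mult_left_mono)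
  have t0: "t \<le> 1/4" using step t_def by simp
  have G0: "G \<ge> 0" "B \<ge> 0" "A \<ge> 0" "E \<ge> 0" "D \<ge> 0" unfolding G_def B_def A_def E_def D_def by auto
  have c1: "\<omega> * P \<ge> s * H" using I1 step(1) unfolding s_def
    by (metis mult.assoc mult_left_mono less_imp_le)
  have c2: "s * H \<ge> s * (A/2 - \<omega>^2 * G)" using I2 s0 by (intro mult_left_mono) auto
  have c3: "\<omega>^2 * D \<le> t^2 * E" using I3 unfolding t_def
    by (metis mult_left_mono power_mult_distrib zero_le_power2 mult.assoc)
  have c4: "t^2 * E \<le> t^2 * (2 * \<omega>^2 * G + 2 * B)" using I4 by (intro mult_left_mono) auto
  have tnn: "0 \<le> t" using s0 by simp
  have "t^2 \<le> (1/4)^2" using tnn t0 by (intro power_mono)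
  then have tt: "t^2 \<le> 1/16" by (simp add: power_divide)
  have neg: "2 * s + 4 * t^2 - 1 \<le> 0" using s0 t0 tt by linarith
  have c5: "\<omega>^2 * G * (2 * s + 4 * t^2 - 1) \<le> 0"
    using neg G0 by (intro mult_nonneg_nonpos) auto
  have c6: "t^2 * B \<le> 1/16 * B" using tt G0 by (intro mult_right_mono) auto
  have c7: "s * A \<ge> 0" using s0 G0 by simp
  have "(norm (xp - xstar))\<^sup>2 + (norm (xp - h))\<^sup>2 = A - 2 * \<omega> * P + 2 * \<omega>^2 * D - \<omega>^2 * G"
    using E1 I5 by simp
  also have "\<dots> \<le> (1 - s/2) * (A + B)"
  proof -
    define W where "W = \<omega>^2 * G"
    have d1: "\<omega> * P \<ge> s * A / 2 - s * W" using c1 c2 unfolding W_def by (simp add: algebra_simps)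
    have d2: "\<omega>^2 * D \<le> 2 * (t^2 * W) + 2 * (t^2 * B)" using c3 c4 unfolding W_def by (simp add: algebra_simps)
    have d3: "2 * (s * W) + 4 * (t^2 * W) - W \<le> 0" using c5 unfolding W_def by (simp add: algebra_simps)
    have d4: "s * B \<le> 1/4 * B" using s0 t0 G0 by (intro mult_right_mono) auto
    have "A - 2 * \<omega> * P + 2 * \<omega>^2 * D - \<omega>^2 * G \<le> A - s * A + B / 4"
      using d1 d2 d3 c6 unfolding W_def by linarith
    also have "\<dots> \<le> (1 - s/2) * (A + B)"
    proof -
      have "(1 - s/2) * (A + B) = A + B - (s * A) / 2 - (s * B) / 2" by (simp add: algebra_simps)
      then show ?thesis using d4 c7 G0 by linarith
    qed
    finally show ?thesis .
  qed
  finally show ?thesis unfolding s_def A_def B_def .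
qed

theorem corollary4p2:
  fixes F :: "real ^ 'd \<Rightarrow> real ^ 'd" and xstar x0 :: "real ^ 'd"
    and L \<mu> \<omega> :: real and k :: nat
  assumes lip: "\<And>x y. norm (F x - F y) \<le> L * norm (x - y)"
    and qsm: "\<mu> > 0" "\<And>x. inner (F x) (x - xstar) \<ge> \<mu> * (norm (x - xstar))\<^sup>2"
    and root: "F xstar = 0"
    and step: "0 < \<omega>" "\<omega> \<le> 1 / (4 * L)"
  shows "(norm (pe_x F \<omega> x0 k - xstar))\<^sup>2 + (norm (pe_x F \<omega> x0 k - pe_xhat_prev F \<omega> x0 k))\<^sup>2
         \<le> (1 - \<omega> * \<mu> / 2) ^ k * ((norm (pe_x F \<omega> x0 0 - xstar))\<^sup>2 + (norm (pe_x F \<omega> x0 0 - pe_xhat_prev F \<omega> x0 0))\<^sup>2)"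
proof -
  have L0: "L > 0"
  proof (rule ccontr)
    assume "\<not> L > 0"
    then have "1 / (4 * L) \<le> 0" by (simp add: divide_nonpos_nonneg divide_le_0_iff)
    then show False using step by linarith
  qed
  have muL: "\<mu> \<le> L"
  proof -
    define v :: "real ^ 'd" where "v = axis undefined 1"
    have nv: "norm v = 1" unfolding v_def by simp
    have "\<mu> = \<mu> * (norm (xstar + v - xstar))\<^sup>2" using nv by simp
    also have "\<dots> \<le> inner (F (xstar + v)) (xstar + v - xstar)" by (rule qsm(2))
    also have "\<dots> \<le> norm (F (xstar + v)) * norm (xstar + v - xstar)" by (rule norm_cauchy_schwarz)
    also have "\<dots> = norm (F (xstar + v) - F xstar)" using nv root by simp
    also have "\<dots> \<le> L * norm (xstar + v - xstar)" by (rule lip)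
    also have "\<dots> = L" using nv by simp
    finally show ?thesis .
  qed
  have wL: "\<omega> * L \<le> 1/4"
  proof -
    have "\<omega> * L \<le> 1 / (4 * L) * L" using step L0 by (intro mult_right_mono) auto
    also have "\<dots> = 1/4" using L0 by simp
    finally show ?thesis .
  qed
  define R where "R = (\<lambda>k. (norm (pe_x F \<omega> x0 k - xstar))\<^sup>2 + (norm (pe_x F \<omega> x0 k - pe_xhat_prev F \<omega> x0 k))\<^sup>2)"
  have one: "R (Suc k) \<le> (1 - \<omega> * \<mu> / 2) * R k" for k
    unfolding R_def pe_x_def pe_xhat_prev_def
    using step_bound[OF lip qsm(2) qsm(1) muL step(1) wL, of "fst (pe_state F \<omega> x0 k)" "snd (pe_state F \<omega> x0 k)"]
    by (simp add: Let_def)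
  have fac: "0 \<le> 1 - \<omega> * \<mu> / 2"
  proof -
    have "\<omega> * \<mu> \<le> \<omega> * L" using muL step by (intro mult_left_mono) auto
    then show ?thesis using wL by linarith
  qed
  have "R k \<le> (1 - \<omega> * \<mu> / 2) ^ k * R 0"
  proof (induction k)
    case 0 then show ?case by simp
  next
    case (Suc k)
    have "R (Suc k) \<le> (1 - \<omega> * \<mu> / 2) * R k" by (rule one)
    also have "\<dots> \<le> (1 - \<omega> * \<mu> / 2) * ((1 - \<omega> * \<mu> / 2) ^ k * R 0)"
      using Suc fac by (intro mult_left_mono) auto
    finally show ?case by simp
  qed
  then show ?thesis unfolding R_def .
qed

end
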